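(* Let $n\in\mathbb N$ and let $S$ be a well ordered subsemigroup of the nonnegative part of $\mathbb R^n$ with the lexicographic order. Suppose that $S$ has ordinal type $\le\omega^h$ for some $h\in\mathbb N$. Then $S$ has ordinal type $\le\omega^n$.
   Context: $\omega$ denotes the ordinal type of $\mathbb N$. The lexicographic order on $\mathbb R^n$ compares first coordinates first. *)

theory Defs
  imports Complex_Main
begin

text \<open>Vectors of R^n are represented as real lists of length n.\<close>

definition lex_less :: "real list \<Rightarrow> real list \<Rightarrow> bool" where
  "lex_less x y \<longleftrightarrow> (x, y) \<in> lexord {(a, b). a < b}"

definition lex_le :: "real list \<Rightarrow> real list \<Rightarrow> bool" where
  "lex_le x y \<longleftrightarrow> x = y \<or> lex_less x y"

definition vec_add :: "real list \<Rightarrow> real list \<Rightarrow> real list" where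
  "vec_add x y = map2 (+) x y"

definition lex_rel :: "real list set \<Rightarrow> real list rel" where
  "lex_rel S = {(x, y). x \<in> S \<and> y \<in> S \<and> lex_le x y}"

text \<open>A canonical well order of ordinal type omega^h: N^h ordered
  lexicographically (first coordinate most significant).\<close>
definition omega_pow :: "nat \<Rightarrow> nat list rel" where
  "omega_pow h = {(xs, ys). length xs = h \<and> length ys = h \<and>
      (xs = ys \<or> (xs, ys) \<in> lexord {(a, b). a < b})}"

end

theory Submission
  imports Defs
begin


lemma wo_inflationary:
  assumes wf: "wf (r - Id)"
    and mono: "\<forall>a b. (a,b) \<in> r - Id \<longrightarrow> (g a, g b) \<in> r - Id"
  shows "(g a, a) \<notin> r - Id"
  using wf
proof (induction a rule: wf_induct_rule)
  case (less a)
  show ?case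
  proof
    assume h: "(g a, a) \<in> r - Id"
    then have "(g (g a), g a) \<notin> r - Id" using less by blast
    moreover have "(g (g a), g a) \<in> r - Id" using mono h by blast
    ultimately show False by blast
  qed
qed

lemma mono_ordLeq:
  assumes r: "Well_order r" and r': "Well_order r'"
    and inF: "\<forall>a\<in>Field r. f a \<in> Field r'"
    and mono: "\<forall>a b. (a,b) \<in> r - Id \<longrightarrow> (f a, f b) \<in> r' - Id"
  shows "(r, r') \<in> ordLeq"
proof (rule ccontr)
  assume "(r, r') \<notin> ordLeq"
  then have "(r', r) \<in> ordLess" using ordLess_or_ordLeq[OF r' r] by blast
  then obtain g where eS: "embedS r' r g" unfolding ordLess_def by blast
  then have e: "embed r' r g" and nb: "\<not> bij_betw g (Field r') (Field r)"
    unfolding embedS_def by auto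
  have inj: "inj_on g (Field r')" using embed_inj_on[OF r' e] .
  have sub: "g ` Field r' \<subseteq> Field r" using embed_Field[OF e] .
  have comp: "compat r' r g" using embed_compat[OF e] .
  have of: "ofilter r (g ` Field r')" using embed_Field_ofilter[OF r' r e] .
  obtain a where aF: "a \<in> Field r" and an: "a \<notin> g ` Field r'"
    using nb inj sub unfolding bij_betw_def by blast
  have wfr: "wf (r - Id)" using r unfolding well_order_on_def by blast
  have tot: "total_on (Field r) r" using r
    unfolding well_order_on_def linear_order_on_def by blast
  define h where "h = g \<circ> f"
  have hm: "\<forall>x y. (x,y) \<in> r - Id \<longrightarrow> (h x, h y) \<in> r - Id"
  proof (intro allI impI)
    fix x y assume xy: "(x,y) \<in> r - Id"
    then have fxy: "(f x, f y) \<in> r' - Id" using mono by blast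
    then have "f x \<in> Field r'" "f y \<in> Field r'" unfolding Field_def by auto
    then have "g (f x) \<noteq> g (f y)" using fxy inj unfolding inj_on_def by auto
    moreover have "(g (f x), g (f y)) \<in> r" using comp fxy unfolding compat_def by blast
    ultimately show "(h x, h y) \<in> r - Id" unfolding h_def by simp
  qed
  have "f a \<in> Field r'" using inF aF by blast
  then have ga: "g (f a) \<in> g ` Field r'" by blast
  then have "g (f a) \<in> Field r" using sub by blast
  have "(g (f a), a) \<in> r"
  proof (rule ccontr)
    assume "(g (f a), a) \<notin> r"
    then have "(a, g (f a)) \<in> r" using tot aF \<open>g (f a) \<in> Field r\<close> an ga
      unfolding total_on_def by metis
    then have "a \<in> under r (g (f a))" unfolding under_def by simp
    then show False using of ga an unfolding ofilter_def by blast
  qed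
  then have "(h a, a) \<in> r - Id" using an ga unfolding h_def by auto
  then show False using wo_inflationary[OF wfr hm] by blast
qed

lemma lexord_less_irrefl: "(xs, xs) \<notin> lexord {(a,b). a < (b::'a::order)}"
  by (rule lexord_irreflexive) auto

lemma lexord_less_trans:
  "(x, y) \<in> lexord {(a,b). a < (b::'a::order)} \<Longrightarrow> (y, z) \<in> lexord {(a,b). a < b}
   \<Longrightarrow> (x, z) \<in> lexord {(a,b). a < b}"
  by (rule lexord_trans) (auto simp: trans_def)

lemma Field_omega_pow: "Field (omega_pow n) = {xs. length xs = n}"
  unfolding omega_pow_def Field_def by auto

lemma omega_pow_wo: "Well_order (omega_pow n)"
proof -
  have wf: "wf (omega_pow n - Id)"
  proof (rule wf_subset)
    show "wf (lexn {(x, y::nat). x < y} n)" by (rule wf_lexn[OF wf_less])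
    show "omega_pow n - Id \<subseteq> lexn {(x, y::nat). x < y} n"
    proof
      fix p assume p: "p \<in> omega_pow n - Id"
      obtain xs ys where pe: "p = (xs, ys)" by (cases p)
      have l: "length xs = n" "length ys = n" and lo: "(xs, ys) \<in> lexord {(x, y::nat). x < y}"
        using p unfolding pe omega_pow_def by auto
      have "(xs, ys) \<in> lex {(x, y::nat). x < y}" by (simp only: lexord_lex l lo)
      then obtain k where k: "(xs, ys) \<in> lexn {(x, y::nat). x < y} k" unfolding lex_def by blast
      then have "k = n" using lexn_length[OF k] l by simp
      then show "p \<in> lexn {(x, y::nat). x < y} n" using k pe by simp
    qed
  qed
  have tr: "trans (omega_pow n)"
  proof (rule transI)
    fix x y z assume "(x,y) \<in> omega_pow n" "(y,z) \<in> omega_pow n"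
    then show "(x,z) \<in> omega_pow n"
      unfolding omega_pow_def using lexord_less_trans[of x y z] by auto
  qed
  have an: "antisym (omega_pow n)"
  proof (rule antisymI)
    fix x y assume "(x,y) \<in> omega_pow n" "(y,x) \<in> omega_pow n"
    then show "x = y"
      unfolding omega_pow_def using lexord_less_trans[of x y x] lexord_less_irrefl[of x] by auto
  qed
  have tot: "total_on (Field (omega_pow n)) (omega_pow n)"
  proof (unfold total_on_def, intro ballI impI)
    fix x y assume x: "x \<in> Field (omega_pow n)" and y: "y \<in> Field (omega_pow n)" and "x \<noteq> y"
    then have "(x,y) \<in> lexord {(x, y::nat). x < y} \<or> (y,x) \<in> lexord {(x, y::nat). x < y}"
    proof -
      have "\<forall>a b::nat. (a,b) \<in> {(x,y). x<y} \<or> a = b \<or> (b,a) \<in> {(x,y). x<y}" by auto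
      from lexord_linear[OF this, of x y] \<open>x \<noteq> y\<close> show ?thesis by blast
    qed
    then show "(x, y) \<in> omega_pow n \<or> (y, x) \<in> omega_pow n"
      using x y unfolding Field_omega_pow unfolding omega_pow_def by auto
  qed
  have sub: "omega_pow n \<subseteq> Field (omega_pow n) \<times> Field (omega_pow n)"
    unfolding Field_omega_pow unfolding omega_pow_def by auto
  have rf: "refl_on (Field (omega_pow n)) (omega_pow n)"
    unfolding refl_on_def Field_omega_pow unfolding omega_pow_def by auto
  show ?thesis
    unfolding well_order_on_def linear_order_on_def partial_order_on_def preorder_on_def
    by (intro conjI wf tr an tot sub rf)
qed




lemma lexI: "i < length x \<Longrightarrow> i < length y \<Longrightarrow> take i x = take i y \<Longrightarrow> (x!i, y!i) \<in> r
  \<Longrightarrow> (x,y) \<in> lexord r"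
  by (auto simp: lexord_take_index_conv)

lemma lexD: "(x,y) \<in> lexord r \<Longrightarrow> length x = length y
  \<Longrightarrow> \<exists>i<length x. take i x = take i y \<and> (x!i, y!i) \<in> r"
  by (auto simp: lexord_take_index_conv)

lemma vec_add_length: "length (vec_add x y) = min (length x) (length y)"
  by (simp add: vec_add_def)

lemma vec_add_nth: "i < length x \<Longrightarrow> i < length y \<Longrightarrow> vec_add x y ! i = x!i + y!i"
  by (simp add: vec_add_def)

lemma vec_add_take: "take i (vec_add x y) = vec_add (take i x) (take i y)"
  by (simp add: vec_add_def take_map take_zip)

fun Esum :: "(nat \<Rightarrow> real list) \<Rightarrow> nat \<Rightarrow> nat list \<Rightarrow> real list" where
  "Esum z p [] = []"
| "Esum z p [j] = z (p+j)"
| "Esum z p (j # k # js) = vec_add (z (p+j)) (Esum z (Suc (p+j)) (k#js))"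

fun Dsum :: "(nat \<Rightarrow> real) \<Rightarrow> nat \<Rightarrow> nat list \<Rightarrow> real" where
  "Dsum d p [] = 0"
| "Dsum d p (j # js) = d (p+j) + Dsum d (Suc (p+j)) js"

lemma E_in:
  assumes "\<forall>k. z k \<in> S" "\<forall>x\<in>S. \<forall>y\<in>S. vec_add x y \<in> S"
  shows "js \<noteq> [] \<Longrightarrow> Esum z p js \<in> S"
  using assms by (induction z p js rule: Esum.induct) auto

lemma E_nth:
  assumes "\<forall>k. length (z k) = n" "i < n" "\<forall>k. z k ! i = L - d k"
  shows "js \<noteq> [] \<Longrightarrow> length (Esum z p js) = n \<and> Esum z p js ! i = real (length js) * L - Dsum d p js"
  using assms
proof (induction z p js rule: Esum.induct)
  case (1 z p)
  then show ?case by simp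
next
  case (2 z p j)
  then show ?case by simp
next
  case (3 z p j k js)
  then show ?case by (simp add: vec_add_length vec_add_nth algebra_simps)
qed

lemma E_take:
  assumes "\<forall>k. take i (z k) = c"
  shows "js \<noteq> [] \<Longrightarrow> length js = length js' \<Longrightarrow> take i (Esum z p js) = take i (Esum z p' js')"
  using assms
proof (induction z p js arbitrary: p' js' rule: Esum.induct)
  case (1 z p)
  then show ?case by simp
next
  case (2 z p j)
  then obtain j' where "js' = [j']" by (cases js') auto
  then show ?case using 2 by simp
next
  case (3 z p j k js)
  obtain j' k' js'' where js': "js' = j' # k' # js''"
    using 3(3) by (cases js'; cases "tl js'") auto
  have "take i (Esum z (Suc (p + j)) (k # js)) = take i (Esum z (Suc (p' + j')) (k' # js''))"
    using 3(1)[of "k' # js''" "Suc (p' + j')"] 3(3,4) js' by simp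
  then show ?case using 3(4) js' by (simp add: vec_add_take)
qed

lemma D_nonneg: "\<forall>k. d k > 0 \<Longrightarrow> Dsum d p js \<ge> 0"
  by (induction js arbitrary: p) (auto simp: add_nonneg_nonneg less_imp_le)

lemma D_upper: "\<forall>k\<ge>q. d k \<le> D \<Longrightarrow> q \<le> p \<Longrightarrow> Dsum d p js \<le> real (length js) * D"
proof (induction js arbitrary: p)
  case Nil
  then show ?case by simp
next
  case (Cons j js)
  have "d (p+j) \<le> D" using Cons.prems by auto
  moreover have "Dsum d (Suc (p+j)) js \<le> real (length js) * D" using Cons by auto
  ultimately show ?case by (simp add: algebra_simps)
qed

lemma D_lex:
  assumes pos: "\<forall>k. d k > 0" and dec: "\<forall>k k'. k < k' \<longrightarrow> d k' \<le> d k / (2 * real m)"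
    and m: "m \<ge> 1"
  shows "length js = length js' \<Longrightarrow> length js \<le> m \<Longrightarrow> (js, js') \<in> lexord {(a,b). a < b}
     \<Longrightarrow> Dsum d p js' < Dsum d p js"
proof (induction js arbitrary: js' p)
  case Nil
  then show ?case by simp
next
  case (Cons j js)
  then obtain j' js'' where js': "js' = j' # js''" by (cases js') auto
  have mpos: "real m \<ge> 1" using m by simp
  show ?case
  proof (cases "j < j'")
    case True
    have dd: "d (p+j') \<le> d (p+j) / (2 * real m)" using dec True by simp
    have anti: "\<forall>k\<ge>p+j'. d k \<le> d (p+j')"
    proof (intro allI impI)
      fix k assume "p + j' \<le> k"
      then consider "k = p+j'" | "p + j' < k" by linarith
      then show "d k \<le> d (p+j')"
      proof cases
        case 2
        then have "d k \<le> d (p+j') / (2 * real m)" using dec by blast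
        also have "\<dots> \<le> d (p+j')" using pos mpos
          by (simp add: divide_le_eq)
        finally show ?thesis .
      qed simp
    qed
    have "Dsum d (Suc (p+j')) js'' \<le> real (length js'') * d (p+j')"
      by (rule D_upper[OF anti]) simp
    then have "Dsum d p js' \<le> real (length js') * d (p+j')"
      unfolding js' by (simp add: algebra_simps)
    also have "\<dots> \<le> real m * d (p+j')"
      using Cons.prems pos by (intro mult_right_mono) (auto simp: less_imp_le)
    also have "\<dots> \<le> real m * (d (p+j) / (2 * real m))"
      using dd mpos by (intro mult_left_mono) auto
    also have "\<dots> = d (p+j) / 2" using mpos by (simp add: field_simps)
    also have "\<dots> < d (p+j)" using pos by simp
    also have "\<dots> \<le> Dsum d p (j # js)" using D_nonneg[OF pos] by simp
    finally show ?thesis .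
  next
    case False
    then have "j = j'" "(js, js'') \<in> lexord {(a,b). a < b}" using Cons.prems js' by auto
    moreover have "length js = length js''" "length js \<le> m" using Cons.prems js' by auto
    ultimately have "Dsum d (Suc (p+j)) js'' < Dsum d (Suc (p+j)) js" using Cons.IH by blast
    then show ?thesis using js' \<open>j = j'\<close> by simp
  qed
qed




lemma acc_embed:
  fixes y :: "nat \<Rightarrow> real list" and a :: "nat \<Rightarrow> real" and m :: nat
  assumes semigroup: "\<forall>x\<in>S. \<forall>y\<in>S. vec_add x y \<in> S"
    and yS: "\<forall>k. y k \<in> S" and ylen: "\<forall>k. length (y k) = n" and i: "i < n"
    and yc: "\<forall>k. take i (y k) = c" and ya: "\<forall>k. y k ! i = a k"
    and inc: "\<forall>k. a k < a (Suc k)" and bnd: "\<forall>k. a k \<le> B" and m: "m \<ge> 1"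
  shows "\<exists>E. (\<forall>js::nat list. length js = m \<longrightarrow> E js \<in> S) \<and>
    (\<forall>js js'::nat list. length js = m \<longrightarrow> length js' = m \<longrightarrow> (js,js') \<in> lexord {(a,b). a<b}
       \<longrightarrow> lex_less (E js) (E js'))"
proof -
  define L where "L = Sup (range a)"
  have bdd: "bdd_above (range a)" using bnd by (auto intro: bdd_aboveI)
  have aL: "a k < L" for k
  proof -
    have "a (Suc k) \<le> L" unfolding L_def by (rule cSUP_upper[OF UNIV_I bdd])
    then show ?thesis using inc by (smt (verit))
  qed
  define \<delta> where "\<delta> k = L - a k" for k
  have \<delta>pos: "\<delta> k > 0" for k using aL unfolding \<delta>_def by simp
  have amono: "k \<le> k' \<Longrightarrow> a k \<le> a k'" for k k'
    using lift_Suc_mono_le[of a k k'] inc by (simp add: less_imp_le)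
  have approx: "\<exists>k. \<delta> k < e" if "e > 0" for e
  proof -
    have "L - e < L" using that by simp
    then have "\<exists>k\<in>UNIV. L - e < a k" unfolding L_def using less_cSUP_iff[of UNIV a] bdd
      by (simp add: L_def)
    then obtain k where "L - e < a k" by blast
    then have "\<delta> k < e" unfolding \<delta>_def by simp
    then show ?thesis by blast
  qed
  have mpos: "real m \<ge> 1" using m by simp
  define nxt where "nxt k = (SOME j. \<delta> j \<le> \<delta> k / (2 * real m))" for k
  have nxt: "\<delta> (nxt k) \<le> \<delta> k / (2 * real m)" for k
  proof -
    have "\<delta> k / (2 * real m) > 0" using \<delta>pos mpos by simp
    then obtain j where "\<delta> j < \<delta> k / (2 * real m)" using approx by blast
    then have "\<exists>j. \<delta> j \<le> \<delta> k / (2 * real m)" by (auto intro: less_imp_le)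
    then show ?thesis unfolding nxt_def by (rule someI_ex)
  qed
  define \<sigma> where "\<sigma> k = (nxt ^^ k) 0" for k
  have \<sigma>S: "\<sigma> (Suc k) = nxt (\<sigma> k)" for k unfolding \<sigma>_def by simp
  define d where "d k = \<delta> (\<sigma> k)" for k
  define z where "z k = y (\<sigma> k)" for k
  have dpos: "\<forall>k. d k > 0" unfolding d_def using \<delta>pos by simp
  have dstep: "d (Suc k) \<le> d k / (2 * real m)" for k unfolding d_def \<sigma>S using nxt by simp
  have dle: "d k / (2 * real m) \<le> d k" for k
    using dpos mpos by (simp add: divide_le_eq)
  have dec: "\<forall>k k'. k < k' \<longrightarrow> d k' \<le> d k / (2 * real m)"
  proof (intro allI impI)
    fix k k' :: nat assume "k < k'"
    then show "d k' \<le> d k / (2 * real m)"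
    proof (induction k')
      case 0 then show ?case by simp
    next
      case (Suc k'')
      show ?case
      proof (cases "k = k''")
        case True then show ?thesis using dstep by simp
      next
        case False
        then have "k < k''" using Suc.prems by simp
        then have "d k'' \<le> d k / (2 * real m)" using Suc.IH by simp
        then show ?thesis using dstep[of k''] dle[of k''] by linarith
      qed
    qed
  qed
  have zS: "\<forall>k. z k \<in> S" using yS unfolding z_def by simp
  have zlen: "\<forall>k. length (z k) = n" using ylen unfolding z_def by simp
  have zi: "\<forall>k. z k ! i = L - d k" using ya unfolding z_def d_def \<delta>_def by simp
  have zc: "\<forall>k. take i (z k) = c" using yc unfolding z_def by simp
  define E where "E = Esum z 0"
  have "(\<forall>js. length js = m \<longrightarrow> E js \<in> S) \<and>
    (\<forall>js js'. length js = m \<longrightarrow> length js' = m \<longrightarrow> (js,js') \<in> lexord {(a,b). a<b}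
       \<longrightarrow> lex_less (E js) (E js'))"
  proof (intro conjI allI impI)
    fix js :: "nat list" assume "length js = m"
    then have "js \<noteq> []" using m by auto
    then show "E js \<in> S" unfolding E_def using E_in[OF zS semigroup] by blast
  next
    fix js js' :: "nat list" assume l: "length js = m" "length js' = m"
      and lx: "(js, js') \<in> lexord {(a,b). a<b}"
    then have ne: "js \<noteq> []" "js' \<noteq> []" using m by auto
    have D: "Dsum d 0 js' < Dsum d 0 js"
      using D_lex[OF dpos dec m] l lx by simp
    have n1: "length (E js) = n \<and> E js ! i = real m * L - Dsum d 0 js"
      using E_nth[OF zlen i zi ne(1)] l unfolding E_def by simp
    have n2: "length (E js') = n \<and> E js' ! i = real m * L - Dsum d 0 js'"
      using E_nth[OF zlen i zi ne(2)] l unfolding E_def by simp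
    have t: "take i (E js) = take i (E js')"
      unfolding E_def using E_take[OF zc ne(1)] l by simp
    show "lex_less (E js) (E js')"
      unfolding lex_less_def
      by (rule lexI[of i]) (use n1 n2 i t D in auto)
  qed
then show ?thesis by blast
qed



lemma Field_lex_rel: "Field (lex_rel S) = S"
proof
  show "Field (lex_rel S) \<subseteq> S" unfolding Field_def lex_rel_def by auto
  show "S \<subseteq> Field (lex_rel S)"
  proof
    fix x assume "x \<in> S"
    then have "(x,x) \<in> lex_rel S" unfolding lex_rel_def lex_le_def by simp
    then show "x \<in> Field (lex_rel S)" unfolding Field_def by blast
  qed
qed

lemma lex_less_irrefl: "\<not> lex_less x x"
  unfolding lex_less_def by (rule lexord_less_irrefl)

lemma lex_rel_strictI: "x \<in> S \<Longrightarrow> y \<in> S \<Longrightarrow> lex_less x y \<Longrightarrow> (x, y) \<in> lex_rel S - Id"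
  unfolding lex_rel_def lex_le_def using lex_less_irrefl by auto

lemma no_big_embed:
  fixes E :: "nat list \<Rightarrow> real list"
  assumes wo: "Well_order (lex_rel S)"
    and tb: "(lex_rel S, omega_pow h) \<in> ordLeq"
    and ES: "\<forall>js. length js = Suc h \<longrightarrow> E js \<in> S"
    and Em: "\<forall>js js'. length js = Suc h \<longrightarrow> length js' = Suc h \<longrightarrow> (js,js') \<in> lexord {(a,b). a<b}
       \<longrightarrow> lex_less (E js) (E js')"
  shows False
proof -
  obtain f where emb: "embed (lex_rel S) (omega_pow h) f" using tb unfolding ordLeq_def by blast
  have comp: "compat (lex_rel S) (omega_pow h) f" using embed_compat[OF emb] .
  have inj: "inj_on f S" using embed_inj_on[OF wo emb] unfolding Field_lex_rel .
  have fl: "length (f s) = h" if "s \<in> S" for s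
  proof -
    have "(s,s) \<in> lex_rel S" using that unfolding lex_rel_def lex_le_def by simp
    then have "(f s, f s) \<in> omega_pow h" using comp unfolding compat_def by blast
    then show ?thesis unfolding omega_pow_def by simp
  qed
  define g where "g s = E (0 # f s)" for s
  have gS: "g s \<in> S" if "s \<in> S" for s unfolding g_def using ES fl[OF that] by simp
  have mono: "\<forall>s t. (s,t) \<in> lex_rel S - Id \<longrightarrow> (g s, g t) \<in> lex_rel S - Id"
  proof (intro allI impI)
    fix s t assume st: "(s,t) \<in> lex_rel S - Id"
    then have sS: "s \<in> S" and tS: "t \<in> S" and ne: "s \<noteq> t" unfolding lex_rel_def by auto
    have "(f s, f t) \<in> omega_pow h" using st comp unfolding compat_def by blast
    moreover have "f s \<noteq> f t" using inj sS tS ne unfolding inj_on_def by blast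
    ultimately have "(f s, f t) \<in> lexord {(a,b). a<b}" unfolding omega_pow_def by auto
    then have "(0 # f s, 0 # f t) \<in> lexord {(a,b). a<b}" by simp
    then have "lex_less (g s) (g t)" unfolding g_def using Em fl[OF sS] fl[OF tS] by simp
    then show "(g s, g t) \<in> lex_rel S - Id" using lex_rel_strictI gS sS tS by blast
  qed
  have wf: "wf (lex_rel S - Id)" using wo unfolding well_order_on_def by blast
  define w where "w = (1::nat) # replicate h 0"
  define a where "a = E w"
  have aS: "a \<in> S" unfolding a_def w_def using ES by simp
  have "(0 # f a, w) \<in> lexord {(a,b). a<b}" unfolding w_def by simp
  moreover have "length (0 # f a) = Suc h" "length w = Suc h" using fl[OF aS] unfolding w_def by auto
  ultimately have "lex_less (E (0 # f a)) (E w)" using Em by blast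
  then have "lex_less (g a) a" unfolding g_def a_def .
  then have "(g a, a) \<in> lex_rel S - Id" using lex_rel_strictI gS aS by blast
  then show False using wo_inflationary[OF wf mono] by blast
qed

definition Aset :: "real list set \<Rightarrow> real list \<Rightarrow> nat \<Rightarrow> real set" where
  "Aset S x i = {v. \<exists>y\<in>S. take i y = take i x \<and> y ! i = v \<and> v < x ! i}"

lemma finiteQ:
  fixes n h :: nat and S :: "real list set"
  assumes dim: "\<forall>x\<in>S. length x = n"
    and semigroup: "\<forall>x\<in>S. \<forall>y\<in>S. vec_add x y \<in> S"
    and wo: "Well_order (lex_rel S)"
    and type_bound: "(lex_rel S, omega_pow h) \<in> ordLeq"
    and xS: "x \<in> S" and i: "i < n"
  shows "finite (Aset S x i)"
proof (rule ccontr)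
  assume "infinite (Aset S x i)"
  then obtain s :: "nat \<Rightarrow> real" where sinj: "inj s" and srange: "range s \<subseteq> Aset S x i"
    using infinite_countable_subset by blast
  obtain \<sigma> :: "nat \<Rightarrow> nat" where sm: "strict_mono \<sigma>" and ms: "monoseq (\<lambda>k. s (\<sigma> k))"
    using seq_monosub by blast
  define t where "t k = s (\<sigma> k)" for k
  have tne: "t k \<noteq> t (Suc k)" for k
  proof
    assume "t k = t (Suc k)"
    then have "\<sigma> k = \<sigma> (Suc k)" using sinj unfolding t_def inj_def by blast
    then show False using sm unfolding strict_mono_def by (metis lessI less_irrefl)
  qed
  have "\<forall>k. \<exists>yk. yk \<in> S \<and> take i yk = take i x \<and> yk ! i = t k \<and> t k < x ! i"
    using srange unfolding t_def Aset_def by blast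
  then obtain y where y: "\<forall>k. y k \<in> S \<and> take i (y k) = take i x \<and> y k ! i = t k \<and> t k < x ! i"
    using choice[of "\<lambda>k yk. yk \<in> S \<and> take i yk = take i x \<and> yk ! i = t k \<and> t k < x ! i"] by blast
  have ylen: "\<forall>k. length (y k) = n" using y dim by blast
  from ms consider "\<forall>m. \<forall>n\<ge>m. t m \<le> t n" | "\<forall>m. \<forall>n\<ge>m. t n \<le> t m"
    unfolding monoseq_def t_def by blast
  then show False
  proof cases
    case 1
    then have inc: "\<forall>k. t k < t (Suc k)" using tne by (metis le_Suc_eq order_le_less)
    have "\<exists>E. (\<forall>js::nat list. length js = Suc h \<longrightarrow> E js \<in> S) \<and>
      (\<forall>js js'::nat list. length js = Suc h \<longrightarrow> length js' = Suc h \<longrightarrow> (js,js') \<in> lexord {(a,b). a<b}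
       \<longrightarrow> lex_less (E js) (E js'))"
      by (rule acc_embed[OF semigroup, of y n i "take i x" t "x ! i"])
        (use y ylen i inc in \<open>auto intro: less_imp_le\<close>)
    then obtain E :: "nat list \<Rightarrow> real list" where
      "\<forall>js. length js = Suc h \<longrightarrow> E js \<in> S"
      "\<forall>js js'. length js = Suc h \<longrightarrow> length js' = Suc h \<longrightarrow> (js,js') \<in> lexord {(a,b). a<b}
       \<longrightarrow> lex_less (E js) (E js')" by blast
    then show False using no_big_embed[OF wo type_bound] by blast
  next
    case 2
    then have dec: "\<forall>k. t (Suc k) < t k" using tne by (metis le_Suc_eq order_le_less)
    have "(y (Suc k), y k) \<in> lex_rel S - Id" for k
    proof -
      have "lex_less (y (Suc k)) (y k)" unfolding lex_less_def
        by (rule lexI[of i]) (use y ylen i dec in auto)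
      then show ?thesis using lex_rel_strictI y by blast
    qed
    moreover have "wf (lex_rel S - Id)" using wo unfolding well_order_on_def by blast
    ultimately show False unfolding wf_iff_no_infinite_down_chain by blast
  qed
qed

theorem mainTheorem6:
  fixes n h :: nat and S :: "real list set"
  assumes dim: "\<forall>x\<in>S. length x = n"
    and nonneg: "\<forall>x\<in>S. lex_le (replicate n 0) x"
    and semigroup: "\<forall>x\<in>S. \<forall>y\<in>S. vec_add x y \<in> S"
    and wo: "Well_order (lex_rel S)"
    and type_bound: "(lex_rel S, omega_pow h) \<in> ordLeq"
  shows "(lex_rel S, omega_pow n) \<in> ordLeq"
proof -
  define \<phi> where "\<phi> x = map (\<lambda>j. card (Aset S x j)) [0..<n]" for x
  have fin: "finite (Aset S x j)" if "x \<in> S" "j < n" for x j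
    using finiteQ[OF dim semigroup wo type_bound that] .
  show ?thesis
  proof (rule mono_ordLeq[OF wo omega_pow_wo])
    show "\<forall>a\<in>Field (lex_rel S). \<phi> a \<in> Field (omega_pow n)"
      unfolding Field_omega_pow \<phi>_def by simp
    show "\<forall>a b. (a, b) \<in> lex_rel S - Id \<longrightarrow> (\<phi> a, \<phi> b) \<in> omega_pow n - Id"
    proof (intro allI impI)
      fix x y assume xy: "(x, y) \<in> lex_rel S - Id"
      then have xS: "x \<in> S" and yS: "y \<in> S" and ne: "x \<noteq> y" and le: "lex_le x y"
        unfolding lex_rel_def by auto
      then have "lex_less x y" unfolding lex_le_def by simp
      then obtain j where j: "j < length x" "take j x = take j y" "x ! j < y ! j"
        using lexD[of x y] dim xS yS unfolding lex_less_def by auto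
      have jn: "j < n" using j dim xS by simp
      have eq: "Aset S x l = Aset S y l" if "l < j" for l
      proof -
        have "take l x = take l y" using j(2) that
          by (metis min.strict_order_iff take_take)
        moreover have "x ! l = y ! l" using j(2) that by (metis nth_take)
        ultimately show ?thesis unfolding Aset_def by simp
      qed
      have sub: "Aset S x j \<subset> Aset S y j"
      proof
        show "Aset S x j \<subseteq> Aset S y j" unfolding Aset_def using j by auto
        have "x ! j \<in> Aset S y j" unfolding Aset_def using xS j by auto
        moreover have "x ! j \<notin> Aset S x j" unfolding Aset_def by auto
        ultimately show "Aset S x j \<noteq> Aset S y j" by blast
      qed
      have cl: "card (Aset S x j) < card (Aset S y j)"
        using psubset_card_mono[OF fin[OF yS jn] sub] .
      have tk: "take j (\<phi> x) = take j (\<phi> y)"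
        unfolding \<phi>_def using jn eq by (simp add: take_map)
      have lx: "(\<phi> x, \<phi> y) \<in> lexord {(a,b). a<b}"
        by (rule lexI[of j]) (use jn tk cl in \<open>auto simp: \<phi>_def\<close>)
      have "\<phi> x \<noteq> \<phi> y" using lx lexord_less_irrefl by metis
      moreover have "length (\<phi> x) = n" "length (\<phi> y) = n" by (simp_all add: \<phi>_def)
      ultimately show "(\<phi> x, \<phi> y) \<in> omega_pow n - Id"
        using lx unfolding omega_pow_def by blast
    qed
  qed
qed


end
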